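(* Let $b\ge2$, $c_{\mathrm{ov}}\ge0$, $c_i>0$, $c_i^\sharp\ge0$ ($i\in[b]$), and $d_j:=c_{\mathrm{ov}}+\sum_{i\ge j}(c_i+c_i^\sharp)$, so that $d_1>d_2>\cdots>d_b$. Let $L^0_{i,\{s,\dots,b\}}>0$ ($1\le s\le i\le b$) satisfy $L^0_{i,\{1,\dots,b\}}\ge L^0_{i,\{2,\dots,b\}}\ge\cdots\ge L^0_{i,\{i,\dots,b\}}$ for each $i$, and set $\delta_{i,s}:=1/(2L^0_{i,\{s,\dots,b\}})$, so $\delta_{i,1}\le\delta_{i,2}\le\cdots\le\delta_{i,i}$. Consider the linear program $$\min_{q\in\mathbb R^b}\ \sum_{j=1}^bd_jq_j\quad\text{s.t.}\quad q_1,\dots,q_b\ge0,\qquad\sum_{s=1}^i\delta_{i,s}q_s\ge1\ \ (i\in[b]).$$ Let $q$ be an optimal point and fix $i\in[b-1]$. If $\sum_{s=1}^i\delta_{i,s}q_s>1$, then $q_i=0$. Equivalently, $q_i>0$ implies $\sum_{s=1}^i\delta_{i,s}q_s=1$.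
   Context: The constants $L^0_{i,\{s,\dots,b\}}$ are the layer-wise smoothness constants for the randomized progressive training supports $\{s,\dots,b\}$; the monotonicity in $s$ is the choice permitted by nestedness of these sets. This program is an equivalent reformulation of minimizing the expected cost of randomized progressive training over the probabilities $p_s$. *)

theory Defs
  imports Complex_Main
begin

text \<open>Indices range over 1..b. d j = c_ov + sum_{i=j..b} (c i + cs i).
  L i s stands for L^0_{i,{s,...,b}}, delta i s = 1/(2 L i s).\<close>

definition dcost :: "nat \<Rightarrow> real \<Rightarrow> (nat \<Rightarrow> real) \<Rightarrow> (nat \<Rightarrow> real) \<Rightarrow> nat \<Rightarrow> real" where
  "dcost b cov c cs j = cov + (\<Sum>i=j..b. c i + cs i)"

definition delta :: "(nat \<Rightarrow> nat \<Rightarrow> real) \<Rightarrow> nat \<Rightarrow> nat \<Rightarrow> real" where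
  "delta L i s = 1 / (2 * L i s)"

definition lp_feasible :: "nat \<Rightarrow> (nat \<Rightarrow> nat \<Rightarrow> real) \<Rightarrow> (nat \<Rightarrow> real) \<Rightarrow> bool" where
  "lp_feasible b L q \<longleftrightarrow>
     (\<forall>j\<in>{1..b}. q j \<ge> 0) \<and>
     (\<forall>i\<in>{1..b}. (\<Sum>s=1..i. delta L i s * q s) \<ge> 1)"

definition lp_objective :: "nat \<Rightarrow> real \<Rightarrow> (nat \<Rightarrow> real) \<Rightarrow> (nat \<Rightarrow> real) \<Rightarrow> (nat \<Rightarrow> real) \<Rightarrow> real" where
  "lp_objective b cov c cs q = (\<Sum>j=1..b. dcost b cov c cs j * q j)"

definition lp_optimal :: "nat \<Rightarrow> real \<Rightarrow> (nat \<Rightarrow> real) \<Rightarrow> (nat \<Rightarrow> real) \<Rightarrow> (nat \<Rightarrow> nat \<Rightarrow> real) \<Rightarrow> (nat \<Rightarrow> real) \<Rightarrow> bool" where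
  "lp_optimal b cov c cs L q \<longleftrightarrow> lp_feasible b L q \<and>
     (\<forall>q'. lp_feasible b L q' \<longrightarrow> lp_objective b cov c cs q \<le> lp_objective b cov c cs q')"

end

theory Submission
  imports Defs
begin

lemma shift_sum:
  fixes f q :: "nat \<Rightarrow> real"
  assumes "A = {1..k}"
  shows "(\<Sum>s\<in>A. f s * (q(i := q i - e, Suc i := q (Suc i) + e)) s) =
     (\<Sum>s\<in>A. f s * q s) + (if Suc i \<in> A then f (Suc i) * e else 0) - (if i \<in> A then f i * e else 0)"
proof -
  have eq: "\<And>s. f s * (q(i := q i - e, Suc i := q (Suc i) + e)) s =
     f s * q s + (if s = Suc i then f s * e else 0) - (if s = i then f s * e else 0)"
    by (auto simp: algebra_simps)
  have fin: "finite A" using assms by simp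
  show ?thesis
    unfolding eq using fin
    by (simp add: sum.distrib sum_subtractf sum.delta')
qed

theorem lemma2:
  fixes b :: nat and cov :: real and c cs :: "nat \<Rightarrow> real"
    and L :: "nat \<Rightarrow> nat \<Rightarrow> real" and q :: "nat \<Rightarrow> real" and i :: nat
  assumes hb: "b \<ge> 2"
    and hcov: "cov \<ge> 0"
    and hc: "\<forall>k\<in>{1..b}. c k > 0"
    and hcs: "\<forall>k\<in>{1..b}. cs k \<ge> 0"
    and hLpos: "\<forall>k\<in>{1..b}. \<forall>s\<in>{1..k}. L k s > 0"
    and hLmono: "\<forall>k\<in>{1..b}. \<forall>s\<in>{1..k}. \<forall>t\<in>{1..k}. s \<le> t \<longrightarrow> L k t \<le> L k s"
    and hopt: "lp_optimal b cov c cs L q"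
    and hi: "i \<in> {1..b-1}"
    and hslack: "(\<Sum>s=1..i. delta L i s * q s) > 1"
  shows "q i = 0"
proof (rule ccontr)
  assume "q i \<noteq> 0"
  have feas: "lp_feasible b L q" and opt: "\<And>q'. lp_feasible b L q' \<Longrightarrow>
      lp_objective b cov c cs q \<le> lp_objective b cov c cs q'"
    using hopt unfolding lp_optimal_def by auto
  have i1: "1 \<le> i" and ib: "Suc i \<le> b" using hi hb by auto
  have "q i \<ge> 0" using feas i1 ib unfolding lp_feasible_def by auto
  with \<open>q i \<noteq> 0\<close> have qi: "q i > 0" by simp
  define S where "S = (\<Sum>s=1..i. delta L i s * q s)"
  have dii: "delta L i i > 0" using hLpos i1 ib unfolding delta_def by auto
  define e where "e = min (q i) ((S - 1) / delta L i i)"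
  have epos: "e > 0" using qi dii hslack unfolding e_def S_def by auto
  have eq: "e \<le> q i" unfolding e_def by simp
  have eS: "delta L i i * e \<le> S - 1" using dii unfolding e_def
    by (metis min.cobounded2 mult.commute pos_le_divide_eq)
  define q' where "q' = q(i := q i - e, Suc i := q (Suc i) + e)"
  have f': "lp_feasible b L q'"
    unfolding lp_feasible_def
  proof (intro conjI ballI)
    fix j assume j: "j \<in> {1..b}"
    have "q j \<ge> 0" "q (Suc i) \<ge> 0" using feas j ib unfolding lp_feasible_def by auto
    then show "q' j \<ge> 0" using eq epos unfolding q'_def by auto
  next
    fix k assume k: "k \<in> {1..b}"
    have base: "(\<Sum>s=1..k. delta L k s * q s) \<ge> 1" using feas k unfolding lp_feasible_def by auto
    have sh: "(\<Sum>s=1..k. delta L k s * q' s) = (\<Sum>s=1..k. delta L k s * q s)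
       + (if Suc i \<in> {1..k} then delta L k (Suc i) * e else 0) - (if i \<in> {1..k} then delta L k i * e else 0)"
      unfolding q'_def by (rule shift_sum[where k=k]) simp
    consider "k < i" | "k = i" | "Suc i \<le> k" by linarith
    then show "(\<Sum>s=1..k. delta L k s * q' s) \<ge> 1"
    proof cases
      case 1 then show ?thesis using sh base by simp
    next
      case 2 then show ?thesis using sh eS i1 unfolding S_def by simp
    next
      case 3
      have "L k (Suc i) \<le> L k i" using hLmono k 3 i1 by auto
      moreover have "L k (Suc i) > 0" using hLpos k 3 by auto
      ultimately have "delta L k i \<le> delta L k (Suc i)" unfolding delta_def
        by (simp add: frac_le)
      then have "delta L k i * e \<le> delta L k (Suc i) * e" using epos by simp
      then show ?thesis using sh base 3 i1 by simp
    qed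
  qed
  have obj: "lp_objective b cov c cs q' = lp_objective b cov c cs q
      + dcost b cov c cs (Suc i) * e - dcost b cov c cs i * e"
    unfolding lp_objective_def q'_def using i1 ib by (subst shift_sum) auto
  have "dcost b cov c cs i = c i + cs i + dcost b cov c cs (Suc i)"
    unfolding dcost_def using i1 ib by (simp add: sum.atLeast_Suc_atMost)
  moreover have "c i + cs i > 0" using hc hcs i1 ib by (meson atLeastAtMost_iff add_pos_nonneg le_SucE le_trans lessI less_imp_le)
  ultimately have "lp_objective b cov c cs q' < lp_objective b cov c cs q"
    using obj epos mult_pos_pos[OF epos \<open>c i + cs i > 0\<close>] by (simp add: algebra_simps)
  with opt[OF f'] show False by simp
qed

end
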